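(* Let $p$ be an odd prime and $r$ an integer with $p \nmid r$. Let $$f_{r,p}(x) = \frac{1}{2\sqrt{2}}\left((1+\sqrt{2})^r (x+\sqrt{2})^p - (1-\sqrt{2})^r (x - \sqrt{2})^p\right) \in \mathbb{Z}[x].$$ Then the discriminant of $f_{r,p}$ is $(-1)^{\frac{p(p-1)}{2}} 2^{\frac{3}{2}(p-1)(p-2)} p^p$. *)

theory Defs
  imports "HOL-Computational_Algebra.Polynomial" "HOL-Computational_Algebra.Primes"
          "Subresultants.Resultant_Prelim"
begin

definition discriminant :: "'a :: field poly \<Rightarrow> 'a" where
  "discriminant f = (-1) ^ (degree f * (degree f - 1) div 2)
      * resultant f (pderiv f) / lead_coeff f"

text \<open>f_{r,p}(x) = ((1+sqrt 2)^r (x+sqrt 2)^p - (1-sqrt 2)^r (x-sqrt 2)^p) / (2 sqrt 2),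
  as a real polynomial (its coefficients are integers); r is an arbitrary integer.\<close>
definition f_rp :: "int \<Rightarrow> nat \<Rightarrow> real poly" where
  "f_rp r p = smult ((1 + sqrt 2) powi r / (2 * sqrt 2)) ([:sqrt 2, 1:] ^ p)
            - smult ((1 - sqrt 2) powi r / (2 * sqrt 2)) ([:- sqrt 2, 1:] ^ p)"

end

theory Submission imports Defs "Subresultants.Subresultant" "Jordan_Normal_Form.Char_Poly" begin

lemma res_euclid:
  fixes F G :: "'a::field poly"
  assumes dg: "degree G \<le> degree F" and g0: "0 < degree G"
  shows "resultant F G = (-1)^(degree F * degree G) * lead_coeff G ^ (degree F - degree (F mod G))
     * resultant G (F mod G)"
proof -
  define H where "H = F mod G"
  have eq: "F + (- (F div G)) * G = H" unfolding H_def
    by (metis add_diff_cancel_left' diff_conv_add_uminus div_mult_mod_eq minus_mult_left mult.commute)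
  have G0: "G \<noteq> 0" using g0 by auto
  have dh: "degree H < degree G"
  proof (cases "H = 0")
    case True then show ?thesis using g0 by simp
  next
    case False then show ?thesis unfolding H_def using degree_mod_less' G0 H_def by blast
  qed
  have ch: "degree H < degree G \<or> H = 0 \<and> F \<noteq> 0 \<and> G \<noteq> 0" using dh by simp
  show ?thesis
  proof (cases "0 < degree H")
    case True
    from BT_lemma_1_12[OF eq dg ch True]
    have "subresultant 0 F G = smult ((- 1) ^ (degree F * degree G) * lead_coeff G ^ (degree F - degree H))
       (subresultant 0 G H)" by simp
    from arg_cong[OF this, of "\<lambda>x. coeff x 0"] show ?thesis
      unfolding subresultant_resultant H_def by simp
  next
    case False
    hence d0: "degree H = 0" by simp
    from BT_lemma_1_13[OF eq dg ch] dh
    have "subresultant 0 F G = smult ((- 1) ^ (degree F * degree G) * lead_coeff G ^ (degree F) *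
       lead_coeff H ^ (degree G - 1)) H" using d0 by simp
    from arg_cong[OF this, of "\<lambda>x. coeff x 0"]
    have "resultant F G = (- 1) ^ (degree F * degree G) * lead_coeff G ^ (degree F) *
       lead_coeff H ^ (degree G - 1) * coeff H 0" unfolding subresultant_resultant by simp
    moreover have "H = [: coeff H 0 :]" using d0 by (metis degree_0_id)
    moreover have "lead_coeff H = coeff H 0" using d0 by simp
    ultimately have "resultant F G = (- 1) ^ (degree F * degree G) * lead_coeff G ^ (degree F) *
       coeff H 0 ^ degree G" using g0 
      by (metis (no_types, lifting) Suc_diff_1 mult.assoc power_Suc2)
    moreover have "resultant G H = coeff H 0 ^ degree G"
      using \<open>H = [: coeff H 0 :]\<close> resultant_const(2) by metis
    ultimately show ?thesis using d0 unfolding H_def by simp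
  qed
qed

lemma lin_prod_dl: "degree (\<Prod>a\<leftarrow>as. [:- a, 1:]) = length (as :: 'a::idom list) \<and> lead_coeff (\<Prod>a\<leftarrow>as. [:- a, 1:]) = (1 :: 'a)"
proof (induction as)
  case Nil then show ?case by simp
next
  case (Cons a as)
  let ?Q = "\<Prod>a\<leftarrow>as. [:- a, 1:]"
  have e: "(\<Prod>a\<leftarrow>a # as. [:- a, 1:]) = [:- a, 1:] * ?Q" by simp
  have "?Q \<noteq> 0" using Cons by auto
  have d: "degree ([:- a, 1:] * ?Q) = 1 + degree ?Q"
    using \<open>?Q \<noteq> 0\<close> by (subst degree_mult_eq) auto
  have l: "lead_coeff ([:- a, 1:] * ?Q) = lead_coeff [:- a, 1:] * lead_coeff ?Q"
    by (rule lead_coeff_mult)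
  have dQ: "degree ?Q = length as" and lQ: "coeff ?Q (degree ?Q) = 1" using Cons by auto
  have lQ': "coeff ?Q (length as) = 1" using lQ unfolding dQ .
  show ?case unfolding e unfolding l unfolding d using dQ lQ' by simp
qed

lemma lin_prod_degree: "degree (\<Prod>a\<leftarrow>as. [:- a, 1:]) = length (as :: 'a::idom list)"
  and lin_prod_lc: "lead_coeff (\<Prod>a\<leftarrow>as. [:- a, 1:]) = (1 :: 'a)"
  using lin_prod_dl by auto

lemma lin_prod_poly: "poly (\<Prod>a\<leftarrow>as. [:- a, 1:]) x = (\<Prod>a\<leftarrow>as. x - (a :: 'a::comm_ring_1))"
  by (induction as) (auto simp: algebra_simps)

lemma prod_list_mult_distrib: "(\<Prod>b\<leftarrow>bs. f b * g b) = (\<Prod>b\<leftarrow>bs. f b) * (\<Prod>b\<leftarrow>bs. (g b :: 'a::comm_monoid_mult))"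
  by (induction bs) (auto simp: ac_simps)

lemma prod_list_const_mult: "(\<Prod>b\<leftarrow>bs. c * g b) = c ^ length bs * (\<Prod>b\<leftarrow>bs. (g b :: 'a::comm_monoid_mult))"
  by (induction bs) (auto simp: ac_simps)

lemma prod_list_neg: "(\<Prod>b\<leftarrow>bs. a - b) = (-1) ^ length bs * (\<Prod>b\<leftarrow>bs. b - (a :: 'a::comm_ring_1))"
  by (induction bs) (auto simp: algebra_simps)

lemma prod_list_swap_diff:
  "(\<Prod>a\<leftarrow>as. \<Prod>b\<leftarrow>bs. a - b) = (-1) ^ (length as * length bs) * (\<Prod>b\<leftarrow>bs. \<Prod>a\<leftarrow>as. b - (a :: 'a::comm_ring_1))"
proof (induction as)
  case Nil then show ?case by (induction bs) auto
next
  case (Cons a as)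
  have "(\<Prod>b\<leftarrow>bs. \<Prod>a\<leftarrow>a # as. b - a) = (\<Prod>b\<leftarrow>bs. b - a) * (\<Prod>b\<leftarrow>bs. \<Prod>a\<leftarrow>as. b - a)"
    by (simp add: prod_list_mult_distrib)
  then show ?case using Cons prod_list_neg[of a bs]
    by (simp add: power_add algebra_simps)
qed

lemma res_roots:
  fixes F G :: "complex poly"
  assumes "F = smult c (\<Prod>a\<leftarrow>as. [:- a, 1:])" "c \<noteq> 0"
  shows "resultant F G = c ^ degree G * (\<Prod>a\<leftarrow>as. poly G a)"
  using assms
proof (induction "degree F + degree G" arbitrary: F G c as rule: less_induct)
  case less
  have dF: "degree F = length as" using less(2,3) lin_prod_degree[of as] by simp
  have lF: "lead_coeff F = c" using less(2,3) lin_prod_lc[of as] lin_prod_degree[of as] by simp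
  have pF: "poly F x = c * (\<Prod>a\<leftarrow>as. x - a)" for x using less(2) lin_prod_poly[of as x] by simp
  show ?case
  proof (cases "degree G = 0")
    case True
    then obtain g where G: "G = [:g:]" by (metis degree_0_id)
    have "(\<Prod>a\<leftarrow>as. poly G a) = g ^ length as" unfolding G
      by (induction as) auto
    moreover have "resultant F G = g ^ degree F" unfolding G by simp
    ultimately show ?thesis using dF True by simp
  next
    case G0: False
    show ?thesis
    proof (cases "degree F = 0")
      case True
      then have "as = []" using dF by simp
      then have "F = [:c:]" using less(2) by simp
      then show ?thesis using \<open>as = []\<close> by simp
    next
      case F0: False
      show ?thesis
      proof (cases "degree G \<le> degree F")
        case True
        obtain bs where G: "smult (lead_coeff G) (\<Prod>b\<leftarrow>bs. [:- b, 1:]) = G" and lbs: "length bs = degree G"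
          using fundamental_theorem_algebra_factorized by blast
        have d0: "lead_coeff G \<noteq> 0" using G0 by auto
        have pG: "poly G x = lead_coeff G * (\<Prod>b\<leftarrow>bs. x - b)" for x
          using arg_cong[OF G, of "\<lambda>q. poly q x"] lin_prod_poly[of bs x] by simp
        have ltR: "degree (F mod G) < degree G"
          using G0 by (metis degree_0 degree_mod_less' gr0I)
        have IH: "resultant G (F mod G) = lead_coeff G ^ degree (F mod G) * (\<Prod>b\<leftarrow>bs. poly (F mod G) b)"
          by (rule less(1)[OF _ G[symmetric] d0]) (use ltR True in simp)
        have "poly (F mod G) b = poly F b" if "b \<in> set bs" for b
        proof -
          have "poly G b = 0" unfolding pG using that by (induction bs) auto
          then show ?thesis by (metis (no_types, lifting) add_0 div_mult_mod_eq mult_zero_right poly_add poly_mult)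
        qed
        then have pR: "(\<Prod>b\<leftarrow>bs. poly (F mod G) b) = (\<Prod>b\<leftarrow>bs. poly F b)"
          by (metis map_eq_conv)
        have "resultant F G = (-1)^(degree F * degree G) * lead_coeff G ^ (degree F) * (\<Prod>b\<leftarrow>bs. poly F b)"
          using res_euclid[OF True] G0 IH pR ltR True
          by (simp add: power_add[symmetric])
        also have "(\<Prod>b\<leftarrow>bs. poly F b) = c ^ length bs * (\<Prod>b\<leftarrow>bs. \<Prod>a\<leftarrow>as. b - a)"
          unfolding pF by (rule prod_list_const_mult)
        also have "(\<Prod>a\<leftarrow>as. poly G a) = lead_coeff G ^ length as * (\<Prod>a\<leftarrow>as. \<Prod>b\<leftarrow>bs. a - b)"
          unfolding pG by (rule prod_list_const_mult)
        ultimately show ?thesis using prod_list_swap_diff[of as bs] dF lbs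
          by (simp add: algebra_simps)
      next
        case False
        have ltR: "degree (G mod F) < degree F"
          using F0 by (metis degree_0 degree_mod_less' gr0I)
        have IH: "resultant F (G mod F) = c ^ degree (G mod F) * (\<Prod>a\<leftarrow>as. poly (G mod F) a)"
          by (rule less(1)[OF _ less(2,3)]) (use ltR False in simp)
        have "poly (G mod F) a = poly G a" if "a \<in> set as" for a
        proof -
          have "poly F a = 0" unfolding pF using that by (induction as) auto
          then show ?thesis by (metis (no_types, lifting) add_0 div_mult_mod_eq mult_zero_right poly_add poly_mult)
        qed
        then have pR: "(\<Prod>a\<leftarrow>as. poly (G mod F) a) = (\<Prod>a\<leftarrow>as. poly G a)"
          by (metis map_eq_conv)
        have "resultant F G = (-1)^(degree F * degree G) * resultant G F"
          by (rule resultant_swap)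
        also have "resultant G F = (-1)^(degree G * degree F) * c ^ (degree G - degree (G mod F)) * resultant F (G mod F)"
          using res_euclid[of F G] False F0 lF by simp
        finally show ?thesis using IH pR ltR False
          by (simp add: power_add[symmetric] algebra_simps flip: power_mult_distrib)
      qed
    qed
  qed
qed

lemma F_deg_lc:
  fixes \<alpha> \<beta> s :: "'a::idom"
  assumes "\<alpha> \<noteq> \<beta>"
  shows "degree (smult \<alpha> ([:s,1:]^p) - smult \<beta> ([:-s,1:]^p)) = p"
    and "lead_coeff (smult \<alpha> ([:s,1:]^p) - smult \<beta> ([:-s,1:]^p)) = \<alpha> - \<beta>"
proof -
  let ?F = "smult \<alpha> ([:s,1:]^p) - smult \<beta> ([:-s,1:]^p)"
  have c1: "coeff ([:s,1:]^p) p = 1" using lead_coeff_power[of "[:s,1:]" p] degree_linear_power[of s p] by simp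
  have c2: "coeff ([:-s,1:]^p) p = 1" using lead_coeff_power[of "[:-s,1:]" p] degree_linear_power[of "-s" p] by simp
  have cp: "coeff ?F p = \<alpha> - \<beta>" using c1 c2 by simp
  have le: "degree ?F \<le> p"
    using degree_linear_power[of s p] degree_linear_power[of "-s" p]
    by (intro degree_diff_le) (auto intro: order_trans[OF degree_smult_le])
  have "p \<le> degree ?F" using cp assms by (intro le_degree) simp
  with le show d: "degree ?F = p" by simp
  show "lead_coeff ?F = \<alpha> - \<beta>" using d cp by simp
qed

lemma prod_list_cong': "(\<And>x. x \<in> set xs \<Longrightarrow> f x = g x) \<Longrightarrow> (\<Prod>x\<leftarrow>xs. f x) = (\<Prod>x\<leftarrow>xs. g x)"
  by (metis map_eq_conv)

lemma disc_main:
  fixes \<alpha> \<beta> s :: complex and p :: nat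
  assumes p: "odd p" and ab: "\<alpha> \<noteq> \<beta>" and a0: "\<alpha> \<noteq> 0" and b0: "\<beta> \<noteq> 0" and s0: "s \<noteq> 0"
  defines "F \<equiv> smult \<alpha> ([:s,1:]^p) - smult \<beta> ([:-s,1:]^p)"
  shows "resultant F (pderiv F) = (\<alpha>-\<beta>) * of_nat p ^ p * (\<alpha>*\<beta>)^(p-1) * (2*s)^(p*(p-1))"
proof -
  define c where "c = \<alpha> - \<beta>"
  have c0: "c \<noteq> 0" using ab c_def by simp
  have dF: "degree F = p" and lF: "lead_coeff F = c" unfolding F_def c_def using F_deg_lc[OF ab] by auto
  obtain as where fa: "smult (lead_coeff F) (\<Prod>a\<leftarrow>as. [:- a, 1:]) = F" and las: "length as = degree F"
    using fundamental_theorem_algebra_factorized by blast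
  have Fas: "F = smult c (\<Prod>a\<leftarrow>as. [:- a, 1:])" using fa lF by simp
  have lp: "length as = p" using las dF by simp
  have pF: "poly F t = c * (\<Prod>a\<leftarrow>as. t - a)" for t using Fas lin_prod_poly[of as t] by simp
  have pFd: "poly F t = \<alpha> * (t+s)^p - \<beta> * (t-s)^p" for t unfolding F_def by (simp add: poly_power ac_simps)
  have pp: "p = Suc (p - 1)" using p by (cases p) auto
  have pF': "poly (pderiv F) t = of_nat p * (\<alpha> * (t+s)^(p-1) - \<beta> * (t-s)^(p-1))" for t
    unfolding F_def pderiv_diff pderiv_smult pderiv_power
    by (simp add: pderiv_pCons poly_power algebra_simps)
  have dF': "degree (pderiv F) = p - 1" using dF by (simp add: degree_pderiv)
  define P where "P = (\<Prod>z\<leftarrow>as. poly (pderiv F) z)"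
  have res: "resultant F (pderiv F) = c ^ (p - 1) * P"
    unfolding P_def using res_roots[OF Fas c0, of "pderiv F"] dF' by simp
  have key: "poly (pderiv F) z * ((z+s)*(z-s)) = (-(2*s*of_nat p*\<alpha>)) * (z+s)^p" if "z \<in> set as" for z
  proof -
    have "poly F z = 0" unfolding pF using that by (induction as) auto
    hence e: "\<beta> * (z-s)^p = \<alpha> * (z+s)^p" unfolding pFd by simp
    have "poly (pderiv F) z * ((z+s)*(z-s)) = of_nat p * (\<alpha> * (z+s)^(p-1) * (z+s) * (z-s) - \<beta> * (z-s)^(p-1) * (z - s) * (z+s))"
      unfolding pF' by (simp add: algebra_simps)
    also have "\<dots> = of_nat p * (\<alpha> * (z+s)^p * (z-s) - \<beta> * (z-s)^p * (z+s))"
      by (subst (1 2) pp) (simp add: algebra_simps)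
    also have "\<dots> = of_nat p * (\<alpha> * (z+s)^p * (z-s) - \<alpha> * (z+s)^p * (z+s))"
      using e by simp
    finally show ?thesis by (simp add: algebra_simps)
  qed
  define Y where "Y = (\<Prod>z\<leftarrow>as. z + s)"
  define Z where "Z = (\<Prod>z\<leftarrow>as. z - s)"
  have prodeq: "P * (Y * Z) = (-(2*s*of_nat p*\<alpha>))^p * Y^p"
  proof -
    have "P * (Y * Z) = (\<Prod>z\<leftarrow>as. poly (pderiv F) z * ((z+s)*(z-s)))"
      unfolding P_def Y_def Z_def by (simp add: prod_list_mult_distrib)
    also have "\<dots> = (\<Prod>z\<leftarrow>as. (-(2*s*of_nat p*\<alpha>)) * (z+s)^p)"
      by (rule prod_list_cong') (rule key)
    also have "\<dots> = (-(2*s*of_nat p*\<alpha>))^p * Y^p"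
      unfolding prod_list_const_mult Y_def prod_list_power lp by (simp add: o_def)
    finally show ?thesis .
  qed
  have cY: "c * Y = - \<beta> * (2*s)^p"
  proof -
    have "poly F (-s) = c * (\<Prod>a\<leftarrow>as. -s - a)" by (rule pF)
    also have "(\<Prod>a\<leftarrow>as. -s - a) = (-1)^p * Y" unfolding Y_def prod_list_neg lp[symmetric]
      by (simp add: algebra_simps)
    finally have "poly F (-s) = - (c * Y)" using p lp by simp
    moreover have "poly F (-s) = \<beta> * (2*s)^p" unfolding pFd using p
      using odd_pos[OF p] by (simp add: power_minus_odd[symmetric])
    ultimately show ?thesis by simp
  qed
  have cZ: "c * Z = - \<alpha> * (2*s)^p"
  proof -
    have "poly F s = c * (\<Prod>a\<leftarrow>as. s - a)" by (rule pF)
    also have "(\<Prod>a\<leftarrow>as. s - a) = (-1)^p * Z" unfolding Z_def prod_list_neg lp by simp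
    finally have "poly F s = - (c * Z)" using p by simp
    moreover have "poly F s = \<alpha> * (2*s)^p" unfolding pFd using p by (simp add: odd_pos)
    ultimately show ?thesis by simp
  qed
  have Y0: "Y \<noteq> 0" using cY b0 s0 c0 by auto
  have Z0: "Z \<noteq> 0" using cZ a0 s0 c0 by auto
  define q where "q = (2::complex) * s"
  have L: "c ^ (p - 1) * P * (Y * Z * c) = (q * of_nat p * \<alpha> * \<beta> * q ^ p) ^ p"
  proof -
    have "c ^ (p - 1) * P * (Y * Z * c) = c ^ p * (P * (Y * Z))"
      by (subst (2) pp) (simp add: algebra_simps)
    also have "\<dots> = (-(2*s*of_nat p*\<alpha>))^p * (c * Y)^p" unfolding prodeq by (simp add: power_mult_distrib)
    also have "\<dots> = (-(2*s*of_nat p*\<alpha>) * (- \<beta> * (2*s)^p))^p" unfolding cY by (rule power_mult_distrib[symmetric])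
    also have "(-(2*s*of_nat p*\<alpha>) * (- \<beta> * (2*s)^p)) = q * of_nat p * \<alpha> * \<beta> * q ^ p"
      unfolding q_def by (simp add: algebra_simps)
    finally show ?thesis .
  qed
  have R: "c * of_nat p ^ p * (\<alpha>*\<beta>)^(p-1) * q^(p*(p-1)) * (Y * Z * c)
      = of_nat p ^ p * (\<alpha>*\<beta>)^(p-1) * q^(p*(p-1)) * ((c * Y) * (c * Z))"
    by (simp add: algebra_simps)
  also have "\<dots> = of_nat p ^ p * (\<alpha>*\<beta>)^(p-1) * (\<alpha> * \<beta>) * q^(p*(p-1)) * q ^ p * q ^ p"
    unfolding cY cZ q_def by (simp add: algebra_simps)
  also have "\<dots> = (q * of_nat p * \<alpha> * \<beta> * q ^ p) ^ p"
  proof -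
    have e1: "(\<alpha>*\<beta>)^(p-1) * (\<alpha> * \<beta>) = (\<alpha>*\<beta>)^p" by (subst (2) pp) (simp add: algebra_simps)
    have ex: "p*(p-1) + p + p = p + p*p" by (subst (1 2) pp) (simp add: algebra_simps)
    have e2: "q^(p*(p-1)) * q ^ p * q ^ p = q ^ p * (q ^ p) ^ p"
      by (simp only: power_add[symmetric] power_mult[symmetric] ex)
    have "of_nat p ^ p * (\<alpha>*\<beta>)^(p-1) * (\<alpha> * \<beta>) * q^(p*(p-1)) * q ^ p * q ^ p
       = of_nat p ^ p * ((\<alpha>*\<beta>)^(p-1) * (\<alpha> * \<beta>)) * (q^(p*(p-1)) * q ^ p * q ^ p)"
      by (simp only: ac_simps)
    also have "\<dots> = of_nat p ^ p * (\<alpha>*\<beta>)^p * (q ^ p * (q ^ p) ^ p)" unfolding e1 e2 ..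
    also have "\<dots> = (q * of_nat p * \<alpha> * \<beta> * q ^ p) ^ p" unfolding power_mult_distrib by (simp only: ac_simps)
    finally show ?thesis .
  qed
  finally have "c ^ (p - 1) * P * (Y * Z * c) = c * of_nat p ^ p * (\<alpha>*\<beta>)^(p-1) * q^(p*(p-1)) * (Y * Z * c)"
    using L by simp
  then have "c ^ (p - 1) * P = c * of_nat p ^ p * (\<alpha>*\<beta>)^(p-1) * q^(p*(p-1))"
    using Y0 Z0 c0 by simp
  then show ?thesis unfolding res q_def c_def .
qed

lemma pow_ne:
  assumes n: "n > 0"
  shows "(1 + sqrt 2) ^ n \<noteq> (1 - sqrt 2 :: real) ^ n"
proof -
  have s1: "1 < sqrt (2::real)" by simp
  have s2: "sqrt (2::real) < 2" by (rule real_less_lsqrt) auto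
  have "1 < (1 + sqrt 2 :: real) ^ n" using s1 n by (intro one_less_power) auto
  moreover have "\<bar>(1 - sqrt 2 :: real) ^ n\<bar> < 1"
    unfolding power_abs using s1 s2 n by (subst power_less_one_iff) auto
  ultimately show ?thesis by auto
qed

lemma AB_ne:
  assumes "r \<noteq> 0"
  shows "(1 + sqrt 2) powi r \<noteq> (1 - sqrt 2 :: real) powi r"
proof (cases "r \<ge> 0")
  case True
  then obtain n where r: "r = int n" by (metis nonneg_eq_int)
  with assms have "n > 0" by simp
  then show ?thesis unfolding r using pow_ne by simp
next
  case False
  then obtain n where r: "r = - int n" by (metis neg_int_cases linorder_not_le)
  with assms have "n > 0" by simp
  then show ?thesis unfolding r power_int_minus using pow_ne by simp
qed

interpretation of_real_poly_hom: map_poly_idom_hom "of_real :: real \<Rightarrow> complex" ..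

theorem theorem4p13:
  fixes p :: nat and r :: int
  assumes "prime p" and "odd p" and "\<not> int p dvd r"
  shows "discriminant (f_rp r p)
         = (-1) ^ (p * (p - 1) div 2) * 2 ^ (3 * (p - 1) * (p - 2) div 2) * real p ^ p"
proof -
  define s where "s = sqrt (2::real)"
  define A where "A = (1 + s) powi r"
  define B where "B = (1 - s) powi r"
  define \<alpha> where "\<alpha> = A / (2 * s)"
  define \<beta> where "\<beta> = B / (2 * s)"
  have r0: "r \<noteq> 0" using assms(3) by auto
  have s0: "s \<noteq> 0" and ss: "s * s = 2" unfolding s_def by auto
  have s1: "1 < s" unfolding s_def by simp
  have AB: "A \<noteq> B" unfolding A_def B_def s_def using AB_ne[OF r0] .
  have A0: "A \<noteq> 0" unfolding A_def using s1 by simp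
  have B0: "B \<noteq> 0" unfolding B_def using s1 by simp
  have ab: "\<alpha> \<noteq> \<beta>" and a0: "\<alpha> \<noteq> 0" and b0: "\<beta> \<noteq> 0" unfolding \<alpha>_def \<beta>_def using AB A0 B0 s0 by auto
  have f: "f_rp r p = smult \<alpha> ([:s,1:]^p) - smult \<beta> ([:-s,1:]^p)"
    unfolding f_rp_def \<alpha>_def \<beta>_def A_def B_def s_def ..
  have dl: "degree (f_rp r p) = p" "lead_coeff (f_rp r p) = \<alpha> - \<beta>"
    unfolding f using F_deg_lc[OF ab] by auto
  have mf: "map_poly complex_of_real (f_rp r p) = smult (of_real \<alpha>) ([:of_real s,1:]^p) - smult (of_real \<beta>) ([:- of_real s,1:]^p)"
    unfolding f by (simp add: hom_distribs)
  have "of_real (resultant (f_rp r p) (pderiv (f_rp r p))) =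
      resultant (map_poly complex_of_real (f_rp r p)) (pderiv (map_poly complex_of_real (f_rp r p)))"
    by (simp add: of_real_hom.resultant_hom of_real_hom.map_poly_pderiv[symmetric])
  also have "\<dots> = (of_real \<alpha> - of_real \<beta>) * of_nat p ^ p * (of_real \<alpha> * of_real \<beta>)^(p-1) * (2 * of_real s)^(p*(p-1))"
    unfolding mf by (rule disc_main) (use assms(2) ab a0 b0 s0 in auto)
  also have "\<dots> = of_real ((\<alpha> - \<beta>) * of_nat p ^ p * (\<alpha> * \<beta>)^(p-1) * (2 * s)^(p*(p-1)))"
    by simp
  finally have res: "resultant (f_rp r p) (pderiv (f_rp r p)) = (\<alpha> - \<beta>) * of_nat p ^ p * (\<alpha> * \<beta>)^(p-1) * (2 * s)^(p*(p-1))"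
    by (simp only: of_real_eq_iff)
  obtain k where pk: "p = 2 * k + 1" using assms(2) oddE by blast
  have AB1: "A * B = (-1) powi r" unfolding A_def B_def power_int_mult_distrib[symmetric]
    using ss by (simp add: algebra_simps)
  have AB2: "(A * B)^2 = 1" unfolding AB1 by (simp add: power_int_minus_left)
  have ab8: "\<alpha> * \<beta> = A * B / 8" unfolding \<alpha>_def \<beta>_def using ss
    by (simp add: field_simps)
  have e1: "(\<alpha> * \<beta>)^(p-1) = 1 / 64 ^ k"
  proof -
    have "(\<alpha> * \<beta>)^(p-1) = ((\<alpha> * \<beta>)^2)^k" unfolding pk by (simp add: power_mult)
    also have "(\<alpha> * \<beta>)^2 = 1 / 64" unfolding ab8 power_divide AB2 by simp
    finally show ?thesis by (simp add: power_divide)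
  qed
  have e2: "(2 * s)^(p*(p-1)) = 8 ^ (k * (2 * k - 1)) * 64 ^ k"
  proof -
    have "(2 * s)^(p*(p-1)) = ((2*s)^2)^(p * k)" unfolding pk power_mult[symmetric] by (simp add: algebra_simps)
    also have "(2*s)^2 = 8" using ss by (simp add: power2_eq_square algebra_simps)
    also have "p * k = k * (2 * k - 1) + 2 * k" unfolding pk by (cases k) (auto simp: algebra_simps)
    also have "(8::real) ^ (k * (2 * k - 1) + 2 * k) = 8 ^ (k * (2 * k - 1)) * 64 ^ k"
      by (simp add: power_add power_mult)
    finally show ?thesis .
  qed
  have e3: "3 * (p - 1) * (p - 2) div 2 = 3 * (k * (2 * k - 1))"
    unfolding pk by (cases k) (auto simp: algebra_simps)
  have e4: "(2::real) ^ (3 * (k * (2 * k - 1))) = 8 ^ (k * (2 * k - 1))"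
    by (simp add: power_mult)
  have c0: "\<alpha> - \<beta> \<noteq> 0" using ab by simp
  have lc: "coeff (f_rp r p) p = \<alpha> - \<beta>" using dl by simp
  have "discriminant (f_rp r p) = (-1) ^ (p * (p - 1) div 2) * (of_nat p ^ p * (\<alpha> * \<beta>)^(p-1) * (2 * s)^(p*(p-1)))"
    unfolding discriminant_def res dl(1) lc using c0 by simp
  also have "of_nat p ^ p * (\<alpha> * \<beta>)^(p-1) * (2 * s)^(p*(p-1)) = 2 ^ (3 * (p - 1) * (p - 2) div 2) * real p ^ p"
    unfolding e1 e2 e3 e4 by simp
  finally show ?thesis by simp
qed

end
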